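(* Let $X$ be a complete CAT(0) space and $(T_n)_{n\in\mathbb{N}}$ a family of self-mappings of $X$, each satisfying property $(P_2)$, with $F:=\bigcap_{n\in\mathbb{N}} Fix(T_n)\neq\emptyset$. For $x\in X$ let $x_0:=x$ and $x_{n+1}:=T_nx_n$ for all $n\in\mathbb{N}$. Let $(\gamma_n)$ be a sequence of positive real numbers with $\sum_{n=0}^\infty\gamma_n^2=\infty$. Assume: (C1) for all $n,m\in\mathbb{N}$ and all $w\in X$, $d(T_nw,T_mw)\le \frac{|\gamma_n-\gamma_m|}{\gamma_n}d(w,T_nw)$; (C2) the sequence $\left(\frac{d(x_n,x_{n+1})}{\gamma_n}\right)_{n\in\mathbb{N}}$ is nonincreasing. Then $(x_n)$ $\Delta$-converges to a point of $F$.
   Context: A geodesic space $(X,d)$ is CAT(0) if for all $z\in X$, all geodesics $\gamma:[a,b]\to X$ and all $t\in[0,1]$, $d^2(z,\gamma((1-t)a+tb))\le(1-t)d^2(z,\gamma(a))+td^2(z,\gamma(b))-t(1-t)d^2(\gamma(a),\gamma(b))$. A mapping $T:X\to X$ satisfies property $(P_2)$ if for all $x,y\in X$, $2d^2(Tx,Ty)\le d^2(x,Ty)+d^2(y,Tx)-d^2(x,Tx)-d^2(y,Ty)$. $Fix(T)$ denotes the fixed point set. For a bounded sequence $(u_n)$, with $r(y,(u_n)):=\limsup_n d(y,u_n)$, an asymptotic center of $(u_n)$ is a point $c\in X$ minimizing $y\mapsto r(y,(u_n))$ over $X$. A bounded sequence $(x_n)$ $\Delta$-converges to $x$ if every subsequence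 of $(x_n)$ has $x$ as its unique asymptotic center. *)

theory Defs
  imports "HOL-Analysis.Analysis"
begin

definition geodesic :: "(real \<Rightarrow> 'a::metric_space) \<Rightarrow> real \<Rightarrow> real \<Rightarrow> bool" where
  "geodesic g a b \<longleftrightarrow> a \<le> b \<and> (\<forall>s\<in>{a..b}. \<forall>t\<in>{a..b}. dist (g s) (g t) = \<bar>s - t\<bar>)"

definition geodesic_space :: "'a::metric_space itself \<Rightarrow> bool" where
  "geodesic_space _ \<longleftrightarrow> (\<forall>x y::'a. \<exists>g a b. geodesic g a b \<and> g a = x \<and> g b = y)"

definition CAT0 :: "'a::metric_space itself \<Rightarrow> bool" where
  "CAT0 TYPE_A \<longleftrightarrow> geodesic_space TYPE_A \<and>
     (\<forall>(z::'a) g a b t. geodesic g a b \<and> t \<in> {0..1} \<longrightarrow>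
        (dist z (g ((1 - t) * a + t * b)))\<^sup>2
          \<le> (1 - t) * (dist z (g a))\<^sup>2 + t * (dist z (g b))\<^sup>2
             - t * (1 - t) * (dist (g a) (g b))\<^sup>2)"

definition property_P2 :: "('a::metric_space \<Rightarrow> 'a) \<Rightarrow> bool" where
  "property_P2 T \<longleftrightarrow> (\<forall>x y. 2 * (dist (T x) (T y))\<^sup>2
      \<le> (dist x (T y))\<^sup>2 + (dist y (T x))\<^sup>2 - (dist x (T x))\<^sup>2 - (dist y (T y))\<^sup>2)"

definition Fix :: "('a \<Rightarrow> 'a) \<Rightarrow> 'a set" where
  "Fix T = {x. T x = x}"

definition asym_radius :: "'a::metric_space \<Rightarrow> (nat \<Rightarrow> 'a) \<Rightarrow> ereal" where
  "asym_radius y u = limsup (\<lambda>n. ereal (dist y (u n)))"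

definition asymptotic_center :: "'a::metric_space \<Rightarrow> (nat \<Rightarrow> 'a) \<Rightarrow> bool" where
  "asymptotic_center c u \<longleftrightarrow> (\<forall>y. asym_radius c u \<le> asym_radius y u)"

definition Delta_converges :: "(nat \<Rightarrow> 'a::metric_space) \<Rightarrow> 'a \<Rightarrow> bool" where
  "Delta_converges u x \<longleftrightarrow> bounded (range u) \<and>
     (\<forall>\<sigma>. strict_mono \<sigma> \<longrightarrow>
        asymptotic_center x (u \<circ> \<sigma>) \<and> (\<forall>c. asymptotic_center c (u \<circ> \<sigma>) \<longrightarrow> c = x))"

end

theory Submission
  imports Defs
begin

definition Ls :: "(nat \<Rightarrow> real) \<Rightarrow> real" where
  "Ls f = real_of_ereal (limsup (\<lambda>n. ereal (f n)))"

definition rb :: "(nat \<Rightarrow> real) \<Rightarrow> bool" where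
  "rb f \<longleftrightarrow> (\<exists>B. \<forall>n. \<bar>f n\<bar> \<le> B)"

lemma Ls_fin: assumes "rb f" shows "limsup (\<lambda>n. ereal (f n)) = ereal (Ls f)"
proof -
  obtain B where B: "\<And>n. \<bar>f n\<bar> \<le> B" using assms rb_def by auto
  have "limsup (\<lambda>n. ereal (f n)) \<le> ereal B"
    by (rule Limsup_bounded) (use B abs_le_D1 in \<open>auto intro!: always_eventually\<close>)
  moreover have "ereal (-B) \<le> limsup (\<lambda>n. ereal (f n))"
    proof (rule le_Limsup)
    show "\<forall>\<^sub>F x in sequentially. ereal (-B) \<le> ereal (f x)"
    proof (intro always_eventually allI)
    fix x show "ereal (-B) \<le> ereal (f x)" using B[of x] by (simp add: abs_le_iff)
  qed
  qed simp
  ultimately have "\<bar>limsup (\<lambda>n. ereal (f n))\<bar> \<noteq> \<infinity>" by auto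
  then show ?thesis unfolding Ls_def by (simp add: ereal_real')
qed

lemma Ls_ev: assumes "rb f" "e > 0" shows "eventually (\<lambda>n. f n < Ls f + e) sequentially"
proof -
  have "limsup (\<lambda>n. ereal (f n)) < ereal (Ls f + e)" using Ls_fin[OF assms(1)] assms(2) by simp
  from Limsup_lessD[OF this] show ?thesis by simp
qed

lemma Ls_le: assumes "rb f" "\<And>e. e > 0 \<Longrightarrow> eventually (\<lambda>n. f n \<le> L + e) sequentially"
  shows "Ls f \<le> L"
proof (rule ccontr)
  assume "\<not> Ls f \<le> L"
  define e where "e = (Ls f - L) / 2"
  have e: "e > 0" using \<open>\<not> Ls f \<le> L\<close> e_def by auto
  have "limsup (\<lambda>n. ereal (f n)) \<le> ereal (L + e)"
    by (rule Limsup_bounded) (use assms(2)[OF e] in auto)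
  then have "Ls f \<le> L + e" using Ls_fin[OF assms(1)] by simp
  then show False
    proof -
    have "Ls f - L = 2*e" using e_def by simp
    then show False using \<open>Ls f \<le> L + e\<close> e by linarith
  qed
qed

lemma Ls_ge: assumes "rb f" "\<And>e. e > 0 \<Longrightarrow> frequently (\<lambda>n. f n \<ge> L - e) sequentially"
  shows "L \<le> Ls f"
proof (rule ccontr)
  assume "\<not> L \<le> Ls f"
  define e where "e = (L - Ls f) / 2"
  have e: "e > 0" using \<open>\<not> L \<le> Ls f\<close> e_def by auto
  have "frequently (\<lambda>n. f n \<ge> L - e \<and> f n < Ls f + e) sequentially"
    by (rule frequently_eventually_frequently[OF assms(2)[OF e] Ls_ev[OF assms(1) e]])
  moreover have "\<And>n. \<not> (f n \<ge> L - e \<and> f n < Ls f + e)" using e_def by auto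
  ultimately show False by (simp add: frequently_def)
qed

lemma Ls_nonneg: assumes "rb f" "\<And>n. f n \<ge> 0" shows "Ls f \<ge> 0"
proof -
  have "0 \<le> Ls f"
  proof (rule Ls_ge[OF assms(1)])
    fix e :: real assume "e > 0"
    then have "eventually (\<lambda>n. f n \<ge> 0 - e) sequentially" using assms(2)
      by (intro always_eventually allI) (smt (verit))
    then show "frequently (\<lambda>n. f n \<ge> 0 - e) sequentially"
      by (rule eventually_frequently[rotated]) simp
  qed
  then show ?thesis .
qed

lemma Ls_lin:
  assumes "rb g" "rb f1" "rb f2" "a \<ge> 0" "b \<ge> 0"
    and H: "\<And>e. e > 0 \<Longrightarrow> eventually (\<lambda>n. g n \<le> a * f1 n + b * f2 n + k + e) sequentially"
  shows "Ls g \<le> a * Ls f1 + b * Ls f2 + k"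
proof (rule Ls_le[OF assms(1)])
  fix e :: real assume e: "e > 0"
  define e' where "e' = e / (2 * (a + b + 1))"
  have e': "e' > 0" using e assms(4,5) e'_def by auto
  have ab: "(a + b) * e' \<le> e / 2"
  proof -
    have "(a + b) * e' = e * ((a+b) / (2 * (a + b + 1)))" using e'_def by simp
    also have "\<dots> \<le> e * (1/2)"
      using e assms(4,5) by (intro mult_left_mono) (auto simp: field_simps)
    finally show ?thesis by simp
  qed
  have "eventually (\<lambda>n. f1 n < Ls f1 + e' \<and> f2 n < Ls f2 + e' \<and> g n \<le> a * f1 n + b * f2 n + k + e/2) sequentially"
    using Ls_ev[OF assms(2) e'] Ls_ev[OF assms(3) e'] H[of "e/2"] e
    by (intro eventually_conj) auto
  then show "eventually (\<lambda>n. g n \<le> a * Ls f1 + b * Ls f2 + k + e) sequentially"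
  proof (rule eventually_mono)
    fix n assume *: "f1 n < Ls f1 + e' \<and> f2 n < Ls f2 + e' \<and> g n \<le> a * f1 n + b * f2 n + k + e/2"
    have "a * f1 n \<le> a * (Ls f1 + e')" using * assms(4) by (intro mult_left_mono) auto
    moreover have "b * f2 n \<le> b * (Ls f2 + e')" using * assms(5) by (intro mult_left_mono) auto
    ultimately show "g n \<le> a * Ls f1 + b * Ls f2 + k + e" using * ab by (simp add: algebra_simps)
  qed
qed

lemma rb_sq: assumes "rb f" shows "rb (\<lambda>n. (f n)\<^sup>2)"
proof -
  obtain B where B: "\<And>n. \<bar>f n\<bar> \<le> B" using assms rb_def by auto
  have "\<bar>(f n)\<^sup>2\<bar> \<le> B\<^sup>2" for n
    using power_mono[OF B[of n] abs_ge_zero, of 2] by simp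
  then show ?thesis unfolding rb_def by blast
qed

lemma Ls_freq: assumes "rb f" "e > 0" shows "frequently (\<lambda>n. f n > Ls f - e) sequentially"
proof (rule ccontr)
  assume "\<not> ?thesis"
  then have "eventually (\<lambda>n. f n \<le> Ls f - e) sequentially"
    by (simp add: not_frequently not_less)
  then have "limsup (\<lambda>n. ereal (f n)) \<le> ereal (Ls f - e)"
    by (intro Limsup_bounded) (auto elim: eventually_mono)
  then show False using Ls_fin[OF assms(1)] assms(2) by simp
qed

lemma ev_sq_small:
  fixes L e :: real assumes "L \<ge> 0" "e > 0"
  shows "\<exists>d>0. (L + d)\<^sup>2 \<le> L\<^sup>2 + e"
proof -
  define d where "d = min 1 (e / (2*L+1))"
  have d: "d > 0" "d \<le> 1" "d \<le> e / (2*L+1)" using assms d_def by auto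
  have "d * (2*L+1) \<le> e" using d(3) assms by (simp add: field_simps)
  moreover have "d * d \<le> d * 1" using d by (intro mult_left_mono) auto
  ultimately have "(L + d)\<^sup>2 \<le> L\<^sup>2 + e"
    by (simp add: power2_eq_square algebra_simps)
  then show ?thesis using d by blast
qed

lemma Ls_sq: assumes "rb f" "\<And>n. f n \<ge> 0"
  shows "Ls (\<lambda>n. (f n)\<^sup>2) = (Ls f)\<^sup>2"
proof (rule antisym)
  let ?L = "Ls f"
  have L0: "?L \<ge> 0" using Ls_nonneg[OF assms] .
  show "Ls (\<lambda>n. (f n)\<^sup>2) \<le> ?L\<^sup>2"
  proof (rule Ls_le[OF rb_sq[OF assms(1)]])
    fix e :: real assume e: "e > 0"
    obtain d where d: "d > 0" "(?L + d)\<^sup>2 \<le> ?L\<^sup>2 + e" using ev_sq_small[OF L0 e] by blast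
    show "eventually (\<lambda>n. (f n)\<^sup>2 \<le> ?L\<^sup>2 + e) sequentially"
      using Ls_ev[OF assms(1) d(1)]
    proof (rule eventually_mono)
      fix n assume "f n < ?L + d"
      then have "(f n)\<^sup>2 \<le> (?L + d)\<^sup>2" using assms(2)[of n] by (intro power_mono) auto
      then show "(f n)\<^sup>2 \<le> ?L\<^sup>2 + e" using d by linarith
    qed
  qed
  show "?L\<^sup>2 \<le> Ls (\<lambda>n. (f n)\<^sup>2)"
  proof (rule Ls_ge[OF rb_sq[OF assms(1)]])
    fix e :: real assume e: "e > 0"
    show "frequently (\<lambda>n. (f n)\<^sup>2 \<ge> ?L\<^sup>2 - e) sequentially"
    proof (cases "?L\<^sup>2 - e < 0")
      case True
      have "eventually (\<lambda>n. (f n)\<^sup>2 \<ge> ?L\<^sup>2 - e) sequentially"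
        using True by (intro always_eventually allI) (smt (verit) zero_le_power2)
      then show ?thesis by (rule eventually_frequently[rotated]) simp
    next
      case False
      then have Lp: "?L > 0" using e L0 by (cases "?L = 0") auto
      define d where "d = min ?L (e / (2 * ?L + 1))"
      have d: "d > 0" "d \<le> ?L" "d \<le> e / (2 * ?L + 1)" using Lp e d_def by auto
      have "d * (2*?L+1) \<le> e" using d(3) L0 by (simp add: field_simps)
      then have "2 * ?L * d \<le> e" using d by (simp add: algebra_simps)
      then have key: "(?L - d)\<^sup>2 \<ge> ?L\<^sup>2 - e"
      proof -
        have "(?L - d)\<^sup>2 = ?L\<^sup>2 - 2*?L*d + d*d" by (simp add: power2_eq_square algebra_simps)
        moreover have "d*d \<ge> 0" by simp
        ultimately show ?thesis using \<open>2 * ?L * d \<le> e\<close> by linarith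
      qed
      have "frequently (\<lambda>n. f n > ?L - d) sequentially"
        using Ls_freq[OF assms(1) d(1)] .
      then show ?thesis
      proof (rule frequently_elim1)
        fix n assume "f n > ?L - d"
        then have "(?L - d)\<^sup>2 \<le> (f n)\<^sup>2" using d by (intro power_mono) auto
        then show "(f n)\<^sup>2 \<ge> ?L\<^sup>2 - e" using key by linarith
      qed
    qed
  qed
qed

definition rho :: "(nat \<Rightarrow> 'a::metric_space) \<Rightarrow> 'a \<Rightarrow> real" where
  "rho u y = Ls (\<lambda>n. dist y (u n))"

lemma rb_dist: assumes "bounded (range u)" shows "rb (\<lambda>n. dist y (u n))"
proof -
  obtain B where "\<forall>z\<in>range u. dist y z \<le> B" using assms bounded_any_center[of _ y] by auto
  then show ?thesis unfolding rb_def by auto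
qed

lemma rho_nonneg: assumes "bounded (range u)" shows "rho u y \<ge> 0"
  unfolding rho_def by (rule Ls_nonneg[OF rb_dist[OF assms]]) simp

lemma asym_radius_eq: assumes "bounded (range u)" shows "asym_radius y u = ereal (rho u y)"
  unfolding asym_radius_def rho_def using Ls_fin[OF rb_dist[OF assms]] by simp

lemma center_iff: assumes "bounded (range u)"
  shows "asymptotic_center c u \<longleftrightarrow> (\<forall>y. rho u c \<le> rho u y)"
  unfolding asymptotic_center_def using asym_radius_eq[OF assms] by simp

lemma rho_lip: assumes "bounded (range u)" shows "rho u y \<le> rho u z + dist y z"
proof -
  have "Ls (\<lambda>n. dist y (u n)) \<le> 1 * Ls (\<lambda>n. dist z (u n)) + 0 * Ls (\<lambda>n. dist z (u n)) + dist y z"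
  proof (rule Ls_lin[OF rb_dist[OF assms] rb_dist[OF assms] rb_dist[OF assms]])
    fix e :: real assume "e > 0"
    then show "eventually (\<lambda>n. dist y (u n) \<le> 1 * dist z (u n) + 0 * dist z (u n) + dist y z + e) sequentially"
      by (intro always_eventually allI) (smt (verit) dist_triangle)
  qed auto
  then show ?thesis unfolding rho_def by simp
qed

lemma cat0_mid: assumes "CAT0 TYPE('a::metric_space)"
  shows "\<exists>m::'a. \<forall>z. (dist z m)\<^sup>2 \<le> (dist z x)\<^sup>2/2 + (dist z y)\<^sup>2/2 - (dist x y)\<^sup>2/4"
proof -
  obtain g a b where g: "geodesic g a b" "g a = x" "g b = y"
    using assms unfolding CAT0_def geodesic_space_def by blast
  have H: "\<And>z. (dist z (g ((1 - 1/2) * a + 1/2 * b)))\<^sup>2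
          \<le> (1 - 1/2) * (dist z (g a))\<^sup>2 + 1/2 * (dist z (g b))\<^sup>2
             - 1/2 * (1 - 1/2) * (dist (g a) (g b))\<^sup>2"
  proof -
    fix z
    have "\<forall>(z::'a) g a b t. geodesic g a b \<and> t \<in> {0..1} \<longrightarrow>
        (dist z (g ((1 - t) * a + t * b)))\<^sup>2
          \<le> (1 - t) * (dist z (g a))\<^sup>2 + t * (dist z (g b))\<^sup>2
             - t * (1 - t) * (dist (g a) (g b))\<^sup>2" using assms unfolding CAT0_def by blast
    from this[rule_format, of g a b "1/2" z] g(1) show "?thesis z" by simp
  qed
  show ?thesis using H g by (intro exI[of _ "g ((1 - 1/2) * a + 1/2 * b)"]) auto
qed

lemma rho_sq: assumes "bounded (range u)" shows "(rho u y)\<^sup>2 = Ls (\<lambda>n. (dist y (u n))\<^sup>2)"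
  unfolding rho_def using Ls_sq[OF rb_dist[OF assms]] by simp

lemma rho_mid:
  assumes bu: "bounded (range u)"
    and m: "\<forall>z. (dist z m)\<^sup>2 \<le> (dist z x)\<^sup>2/2 + (dist z y)\<^sup>2/2 - (dist x y)\<^sup>2/4"
  shows "(rho u m)\<^sup>2 \<le> (rho u x)\<^sup>2/2 + (rho u y)\<^sup>2/2 - (dist x y)\<^sup>2/4"
proof -
  have "Ls (\<lambda>n. (dist m (u n))\<^sup>2) \<le> (1/2) * Ls (\<lambda>n. (dist x (u n))\<^sup>2) + (1/2) * Ls (\<lambda>n. (dist y (u n))\<^sup>2) + (- (dist x y)\<^sup>2/4)"
  proof (rule Ls_lin[OF rb_sq[OF rb_dist[OF bu]] rb_sq[OF rb_dist[OF bu]] rb_sq[OF rb_dist[OF bu]]])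
    fix e :: real assume "e > 0"
    then show "eventually (\<lambda>n. (dist m (u n))\<^sup>2 \<le> (1/2) * (dist x (u n))\<^sup>2 + (1/2) * (dist y (u n))\<^sup>2 + (- (dist x y)\<^sup>2/4) + e) sequentially"
    proof (intro always_eventually allI)
      fix n
      have "(dist (u n) m)\<^sup>2 \<le> (dist (u n) x)\<^sup>2/2 + (dist (u n) y)\<^sup>2/2 - (dist x y)\<^sup>2/4" using m by blast
      then show "(dist m (u n))\<^sup>2 \<le> (1/2) * (dist x (u n))\<^sup>2 + (1/2) * (dist y (u n))\<^sup>2 + (- (dist x y)\<^sup>2/4) + e"
        using \<open>e > 0\<close> by (simp add: dist_commute)
    qed
  qed auto
  then show ?thesis using rho_sq[OF bu] by simp
qed

lemma center_unique:
  assumes cat: "CAT0 TYPE('a::metric_space)" and bu: "bounded (range (u::nat \<Rightarrow> 'a))"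
    and c1: "\<forall>y. rho u c1 \<le> rho u y" and c2: "\<forall>y. rho u c2 \<le> rho u y"
  shows "c1 = c2"
proof -
  obtain m where m: "\<forall>z. (dist z m)\<^sup>2 \<le> (dist z c1)\<^sup>2/2 + (dist z c2)\<^sup>2/2 - (dist c1 c2)\<^sup>2/4"
    using cat0_mid[OF cat] by blast
  have R: "rho u c1 = rho u c2" using c1 c2 by (meson antisym)
  have "(rho u c1)\<^sup>2 \<le> (rho u m)\<^sup>2"
    using c1 rho_nonneg[OF bu] by (intro power_mono) auto
  moreover have "(rho u c2)\<^sup>2 = (rho u c1)\<^sup>2" using R by simp
  ultimately have "(dist c1 c2)\<^sup>2 \<le> 0" using rho_mid[OF bu m] by linarith
  then show ?thesis by simp
qed

lemma eventually_inv_small: assumes "(e::real) > 0"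
  shows "eventually (\<lambda>k. 1 / (real k + 1) < e) sequentially"
proof -
  obtain N where N: "1 / e < real N" using reals_Archimedean2 by blast
  show ?thesis unfolding eventually_sequentially
  proof (intro exI allI impI)
    fix k assume "N \<le> k"
    then have "1 / e < real k + 1" using N by linarith
    then show "1 / (real k + 1) < e" using assms by (simp add: field_simps)
  qed
qed

lemma center_exists:
  assumes cat: "CAT0 TYPE('a::complete_space)" and bu: "bounded (range (u::nat \<Rightarrow> 'a))"
  shows "\<exists>c. \<forall>y. rho u c \<le> rho u y"
proof -
  define R where "R = Inf (range (rho u))"
  have bb: "bdd_below (range (rho u))" using rho_nonneg[OF bu] by (auto intro!: bdd_belowI[of _ 0])
  have R0: "R \<ge> 0" unfolding R_def using rho_nonneg[OF bu] by (intro cInf_greatest) auto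
  have Rle: "R \<le> rho u y" for y unfolding R_def using bb by (intro cInf_lower) auto
  have "\<exists>y. rho u y < R + 1 / (real k + 1)" for k
  proof -
    have "Inf (range (rho u)) < R + 1 / (real k + 1)" unfolding R_def by simp
    from cInf_lessD[OF _ this] show ?thesis by auto
  qed
  then obtain yk where yk: "\<And>k. rho u (yk k) < R + 1 / (real k + 1)" by metis
  have sq: "(rho u (yk k))\<^sup>2 \<le> R\<^sup>2 + 1 / (real k + 1) * (2*R+1)" for k
  proof -
    let ?e = "1 / (real k + 1)"
    have e: "?e > 0" "?e \<le> 1" by (auto simp: field_simps)
    have "(rho u (yk k))\<^sup>2 \<le> (R + ?e)\<^sup>2"
      using yk[of k] rho_nonneg[OF bu] by (intro power_mono) auto
    moreover have "?e * ?e \<le> ?e * 1" using e by (intro mult_left_mono) auto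
    ultimately show ?thesis by (simp add: power2_eq_square algebra_simps)
  qed
  have dk: "(dist (yk k) (yk l))\<^sup>2 \<le> 2 * (1 / (real k + 1) * (2*R+1)) + 2 * (1 / (real l + 1) * (2*R+1))" for k l
  proof -
    obtain m where m: "\<forall>z. (dist z m)\<^sup>2 \<le> (dist z (yk k))\<^sup>2/2 + (dist z (yk l))\<^sup>2/2 - (dist (yk k) (yk l))\<^sup>2/4"
      using cat0_mid[OF cat] by blast
    have "R\<^sup>2 \<le> (rho u m)\<^sup>2" using Rle[of m] R0 by (intro power_mono) auto
    then show ?thesis using rho_mid[OF bu m] sq[of k] sq[of l] by linarith
  qed
  have "Cauchy yk"
  proof (rule metric_CauchyI)
    fix e :: real assume e: "e > 0"
    obtain M where M: "4 * (2*R+1) / e\<^sup>2 < real M" using reals_Archimedean2 by blast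
    have M': "4 * (2*R+1) / (real M + 1) < e\<^sup>2"
    proof -
      have "4 * (2*R+1) < e\<^sup>2 * real M" using M e by (simp add: field_simps)
      also have "\<dots> \<le> e\<^sup>2 * (real M + 1)" using e by (intro mult_left_mono) auto
      finally show ?thesis by (simp add: field_simps)
    qed
    show "\<exists>M. \<forall>m\<ge>M. \<forall>n\<ge>M. dist (yk m) (yk n) < e"
    proof (intro exI allI impI)
      fix k l assume kl: "M \<le> k" "M \<le> l"
      have a: "1 / (real k + 1) \<le> 1 / (real M + 1)" "1 / (real l + 1) \<le> 1 / (real M + 1)"
        using kl by (auto simp: field_simps)
      have "1 / (real k + 1) * (2*R+1) \<le> 1 / (real M + 1) * (2*R+1)"
           "1 / (real l + 1) * (2*R+1) \<le> 1 / (real M + 1) * (2*R+1)"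
        by (rule mult_right_mono[OF a(1)], use R0 in simp) (rule mult_right_mono[OF a(2)], use R0 in simp)
      moreover have "4 * (1 / (real M + 1) * (2*R+1)) = 4 * (2*R+1) / (real M + 1)" by simp
      ultimately have "(dist (yk k) (yk l))\<^sup>2 < e\<^sup>2" using dk[of k l] M' by linarith
      then show "dist (yk k) (yk l) < e" using e by (simp add: power_less_imp_less_base)
    qed
  qed
  then obtain c where c: "yk \<longlonglongrightarrow> c" using Cauchy_convergent_iff convergent_def by blast
  have "rho u c \<le> R"
  proof (rule field_le_epsilon)
    fix e :: real assume e: "e > 0"
    have "eventually (\<lambda>k. dist (yk k) c < e/2 \<and> 1 / (real k + 1) < e/2) sequentially"
      using tendstoD[OF c, of "e/2"] eventually_inv_small[of "e/2"] e by (intro eventually_conj) auto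
    then obtain k where k: "dist (yk k) c < e/2" "1 / (real k + 1) < e/2"
      using eventually_sequentially by auto
    have "rho u c \<le> rho u (yk k) + dist c (yk k)" by (rule rho_lip[OF bu])
    then show "rho u c \<le> R + e" using k yk[of k] by (simp add: dist_commute)
  qed
  then show ?thesis using Rle by (intro exI[of _ c]) (auto intro: order_trans)
qed

lemma demi_point:
  fixes A B C D K d MA MC :: real
  assumes "A \<ge> 0" "B \<ge> 0" "C \<ge> 0" "d \<ge> 0" "d \<le> 1" "A \<le> MA" "C \<le> MC"
    "A \<le> B + d" "B \<le> A + d" "D \<le> C + d" "D \<ge> 0"
    "2 * B\<^sup>2 \<le> A\<^sup>2 + D\<^sup>2 - d\<^sup>2 - K"
  shows "A\<^sup>2 \<le> C\<^sup>2 - K + d * (2*MC + 4*MA + 6)"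
proof -
  have "A\<^sup>2 \<le> (B + d)\<^sup>2" using assms by (intro power_mono) auto
  then have f1: "A\<^sup>2 \<le> B\<^sup>2 + 2*(B*d) + d\<^sup>2" by (simp add: power2_eq_square algebra_simps)
  have "B*d \<le> (A+d)*d" using assms by (intro mult_right_mono) auto
  then have f2: "B*d \<le> A*d + d\<^sup>2" by (simp add: power2_eq_square algebra_simps)
  have "D\<^sup>2 \<le> (C + d)\<^sup>2" using assms by (intro power_mono) auto
  then have f3: "D\<^sup>2 \<le> C\<^sup>2 + 2*(C*d) + d\<^sup>2" by (simp add: power2_eq_square algebra_simps)
  have f5: "A*d \<le> MA*d" using assms by (intro mult_right_mono) auto
  have f6: "C*d \<le> MC*d" using assms by (intro mult_right_mono) auto
  have "d*d \<le> d*1" using assms by (intro mult_left_mono) auto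
  then have f7: "d\<^sup>2 \<le> d" by (simp add: power2_eq_square)
  have "A\<^sup>2 \<le> C\<^sup>2 - K + 2*(MC*d) + 4*(MA*d) + 6*d"
    using f1 f2 f3 f5 f6 f7 assms(12) by linarith
  then show ?thesis by (simp add: algebra_simps)
qed

lemma demi:
  assumes P2: "property_P2 T" and bu: "bounded (range v)"
    and dl: "\<And>e. e > 0 \<Longrightarrow> eventually (\<lambda>n. dist (v n) (T (v n)) < e) sequentially"
    and c: "\<forall>y. rho v c \<le> rho v y"
  shows "T c = c"
proof -
  obtain MA where MA: "\<And>n. \<bar>dist (T c) (v n)\<bar> \<le> MA" using rb_dist[OF bu, of "T c"] rb_def by auto
  obtain MC where MC: "\<And>n. \<bar>dist c (v n)\<bar> \<le> MC" using rb_dist[OF bu, of c] rb_def by auto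
  have MA0: "MA \<ge> 0" using MA[of 0] by linarith
  have MC0: "MC \<ge> 0" using MC[of 0] by linarith
  define Kc where "Kc = 2*MC + 4*MA + 6"
  have Kc0: "Kc \<ge> 0" using MA0 MC0 Kc_def by simp
  define K where "K = (dist c (T c))\<^sup>2"
  have pt: "(dist (T c) (v n))\<^sup>2 \<le> (dist c (v n))\<^sup>2 - K + dist (v n) (T (v n)) * Kc"
    if "dist (v n) (T (v n)) \<le> 1" for n
  proof -
    have p: "2 * (dist (T (v n)) (T c))\<^sup>2 \<le> (dist (v n) (T c))\<^sup>2 + (dist c (T (v n)))\<^sup>2
        - (dist (v n) (T (v n)))\<^sup>2 - (dist c (T c))\<^sup>2"
      using P2 unfolding property_P2_def by blast
    show ?thesis unfolding Kc_def K_def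
    proof (rule demi_point)
      show "dist (T c) (v n) \<le> dist (T (v n)) (T c) + dist (v n) (T (v n))"
        by (metis dist_commute dist_triangle)
      show "dist (T (v n)) (T c) \<le> dist (T c) (v n) + dist (v n) (T (v n))"
        by (metis add.commute dist_commute dist_triangle)
      show "dist c (T (v n)) \<le> dist c (v n) + dist (v n) (T (v n))"
        by (rule dist_triangle)
      show "2 * (dist (T (v n)) (T c))\<^sup>2 \<le> (dist (T c) (v n))\<^sup>2 + (dist c (T (v n)))\<^sup>2 - (dist (v n) (T (v n)))\<^sup>2 - (dist c (T c))\<^sup>2"
        using p by (simp add: dist_commute)
    qed (use that MA[of n] MC[of n] in auto)
  qed
  have "Ls (\<lambda>n. (dist (T c) (v n))\<^sup>2) \<le> 1 * Ls (\<lambda>n. (dist c (v n))\<^sup>2) + 0 * Ls (\<lambda>n. (dist c (v n))\<^sup>2) + (-K)"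
  proof (rule Ls_lin[OF rb_sq[OF rb_dist[OF bu]] rb_sq[OF rb_dist[OF bu]] rb_sq[OF rb_dist[OF bu]]])
    fix e :: real assume e: "e > 0"
    have "min 1 (e / (Kc + 1)) > 0" using e Kc0 by simp
    from dl[OF this]
    show "eventually (\<lambda>n. (dist (T c) (v n))\<^sup>2 \<le> 1 * (dist c (v n))\<^sup>2 + 0 * (dist c (v n))\<^sup>2 + (-K) + e) sequentially"
    proof (rule eventually_mono)
      fix n assume n: "dist (v n) (T (v n)) < min 1 (e / (Kc + 1))"
      let ?d = "dist (v n) (T (v n))"
      have "?d * Kc \<le> ?d * (Kc + 1)" using Kc0 by (intro mult_left_mono) auto
      also have "\<dots> \<le> e" using n Kc0 by (simp add: field_simps)
      finally show "(dist (T c) (v n))\<^sup>2 \<le> 1 * (dist c (v n))\<^sup>2 + 0 * (dist c (v n))\<^sup>2 + (-K) + e"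
        using pt[of n] n by simp
    qed
  qed auto
  then have "(rho v (T c))\<^sup>2 \<le> (rho v c)\<^sup>2 - K" using rho_sq[OF bu] by simp
  moreover have "(rho v c)\<^sup>2 \<le> (rho v (T c))\<^sup>2"
    using c rho_nonneg[OF bu] by (intro power_mono) auto
  ultimately have "K \<le> 0" by linarith
  then show ?thesis unfolding K_def by simp
qed

lemma Ls_lim: assumes "rb f" "f \<longlonglongrightarrow> l" shows "Ls f = l"
proof (rule antisym)
  show "Ls f \<le> l"
  proof (rule Ls_le[OF assms(1)])
    fix e :: real assume "e > 0"
    from tendstoD[OF assms(2) this] show "eventually (\<lambda>n. f n \<le> l + e) sequentially"
      by (rule eventually_mono) (simp add: dist_real_def)
  qed
  show "l \<le> Ls f"
  proof (rule Ls_ge[OF assms(1)])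
    fix e :: real assume "e > 0"
    from tendstoD[OF assms(2) this] have "eventually (\<lambda>n. f n \<ge> l - e) sequentially"
      by (rule eventually_mono) (simp add: dist_real_def)
    then show "frequently (\<lambda>n. f n \<ge> l - e) sequentially"
      by (rule eventually_frequently[rotated]) simp
  qed
qed

theorem theorem3p5:
  fixes T :: "nat \<Rightarrow> 'a::complete_space \<Rightarrow> 'a"
    and x :: 'a and xs :: "nat \<Rightarrow> 'a" and \<gamma> :: "nat \<Rightarrow> real"
  assumes "CAT0 TYPE('a)"
    and "\<And>n. property_P2 (T n)"
    and "(\<Inter>n. Fix (T n)) \<noteq> {}"
    and "xs 0 = x" and "\<And>n. xs (Suc n) = T n (xs n)"
    and "\<And>n. \<gamma> n > 0"
    and "\<not> summable (\<lambda>n. (\<gamma> n)\<^sup>2)"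
    and C1: "\<And>n m w. dist (T n w) (T m w) \<le> \<bar>\<gamma> n - \<gamma> m\<bar> / \<gamma> n * dist w (T n w)"
    and C2: "decseq (\<lambda>n. dist (xs n) (xs (Suc n)) / \<gamma> n)"
  shows "\<exists>p\<in>(\<Inter>n. Fix (T n)). Delta_converges xs p"
proof -
  note cat = assms(1) and P2 = assms(2) and xsS = assms(5) and gpos = assms(6) and nsum = assms(7)
  define F where "F = (\<Inter>n. Fix (T n))"
  obtain q0 where q0: "q0 \<in> F" using assms(3) F_def by auto
  define d where "d n = dist (xs n) (xs (Suc n))" for n
  define a where "a n = d n / \<gamma> n" for n
  have d0: "d n \<ge> 0" for n unfolding d_def by simp
  have a0: "a n \<ge> 0" for n unfolding a_def using d0[of n] gpos[of n] by simp
  have Fix: "T n q = q" if "q \<in> F" for q n using that unfolding F_def Fix_def by auto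
  have fej: "(dist (xs (Suc n)) q)\<^sup>2 \<le> (dist (xs n) q)\<^sup>2 - (d n)\<^sup>2" if q: "q \<in> F" for q n
  proof -
    have "2 * (dist (T n (xs n)) (T n q))\<^sup>2 \<le> (dist (xs n) (T n q))\<^sup>2 + (dist q (T n (xs n)))\<^sup>2
        - (dist (xs n) (T n (xs n)))\<^sup>2 - (dist q (T n q))\<^sup>2"
      using P2[of n] unfolding property_P2_def by blast
    then have "2 * (dist (xs (Suc n)) q)\<^sup>2 \<le> (dist (xs n) q)\<^sup>2 + (dist q (xs (Suc n)))\<^sup>2
        - (dist (xs n) (xs (Suc n)))\<^sup>2 - (dist q q)\<^sup>2"
      by (simp only: Fix[OF q, of n] xsS[of n, symmetric])
    moreover have "dist q (xs (Suc n)) = dist (xs (Suc n)) q" by (rule dist_commute)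
    ultimately show ?thesis unfolding d_def by simp
  qed
  have decq: "dist (xs (Suc n)) q \<le> dist (xs n) q" if q: "q \<in> F" for q n
  proof -
    have "(dist (xs (Suc n)) q)\<^sup>2 \<le> (dist (xs n) q)\<^sup>2" using fej[OF q, of n] by (smt (verit) zero_le_power2)
    then show ?thesis by (rule power2_le_imp_le) simp
  qed
  have bnd: "dist (xs n) q \<le> dist (xs 0) q" if q: "q \<in> F" for q n
    using lift_Suc_antimono_le[of "\<lambda>n. dist (xs n) q", OF decq[OF q]] by simp
  have bu: "bounded (range xs)"
    unfolding bounded_def
  proof (intro exI[of _ q0] exI[of _ "dist (xs 0) q0"] ballI)
    fix y assume "y \<in> range xs"
    then obtain n where "y = xs n" by auto
    then show "dist q0 y \<le> dist (xs 0) q0" using bnd[OF q0, of n] dist_commute[of q0 "xs n"] by simp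
  qed
  have bus: "bounded (range (xs \<circ> \<sigma>))" for \<sigma> by (rule bounded_subset[OF bu]) (simp add: image_subsetI)
  have lim: "(\<lambda>n. dist (xs n) q) \<longlonglongrightarrow> lim (\<lambda>n. dist (xs n) q)" if q: "q \<in> F" for q
  proof -
    have dq: "decseq (\<lambda>n. dist (xs n) q)" by (rule decseq_SucI) (rule decq[OF q])
    obtain L where "(\<lambda>n. dist (xs n) q) \<longlonglongrightarrow> L" by (rule decseq_convergent[OF dq, of 0]) auto
    then show ?thesis using limI[of "\<lambda>n. dist (xs n) q" L] by simp
  qed
  have rhoF: "rho (xs \<circ> \<sigma>) q = lim (\<lambda>n. dist (xs n) q)" if q: "q \<in> F" and s: "strict_mono \<sigma>" for q \<sigma>
  proof -
    have "(\<lambda>n. dist q ((xs \<circ> \<sigma>) n)) \<longlonglongrightarrow> lim (\<lambda>n. dist (xs n) q)"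
      using LIMSEQ_subseq_LIMSEQ[OF lim[OF q] s] by (simp add: dist_commute comp_def)
    then show ?thesis unfolding rho_def using Ls_lim[OF rb_dist[OF bus]] by blast
  qed
  have psum: "(\<Sum>k<N. (d k)\<^sup>2) \<le> (dist (xs 0) q0)\<^sup>2 - (dist (xs N) q0)\<^sup>2" for N
  proof (induction N)
    case 0 then show ?case by simp
  next
    case (Suc N) then show ?case using fej[OF q0, of N] by simp
  qed
  have sumd: "summable (\<lambda>n. (d n)\<^sup>2)"
  proof (rule summableI_nonneg_bounded)
    show "(\<Sum>k<n. (d k)\<^sup>2) \<le> (dist (xs 0) q0)\<^sup>2" for n using psum[of n] by (smt (verit) zero_le_power2)
  qed simp
  have aev: "eventually (\<lambda>n. a n < e) sequentially" if e: "e > 0" for e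
  proof (rule ccontr)
    assume na: "\<not> ?thesis"
    have ge: "a n \<ge> e" for n
    proof -
      from na obtain m where "m \<ge> n" "\<not> a m < e" unfolding eventually_sequentially by auto
      moreover have "a m \<le> a n" using decseqD[OF C2 \<open>m \<ge> n\<close>] unfolding a_def d_def by simp
      ultimately show ?thesis by simp
    qed
    have "summable (\<lambda>n. (\<gamma> n)\<^sup>2)"
    proof (rule summable_comparison_test')
      show "summable (\<lambda>n. (d n)\<^sup>2 / e\<^sup>2)" using sumd by (rule summable_divide)
      fix n :: nat
      have "e \<le> d n / \<gamma> n" using ge[of n] unfolding a_def .
      then have "e * \<gamma> n \<le> d n" using gpos[of n] by (subst (asm) le_divide_eq) simp
      then have "(e * \<gamma> n)\<^sup>2 \<le> (d n)\<^sup>2" using e gpos[of n] by (intro power_mono) auto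
      then have "(\<gamma> n)\<^sup>2 * e\<^sup>2 \<le> (d n)\<^sup>2" by (simp only: power_mult_distrib mult.commute)
      then have "(\<gamma> n)\<^sup>2 \<le> (d n)\<^sup>2 / e\<^sup>2" using e by (subst le_divide_eq) simp
      then show "norm ((\<gamma> n)\<^sup>2) \<le> (d n)\<^sup>2 / e\<^sup>2" by simp
    qed
    then show False using nsum by simp
  qed
  have dev: "eventually (\<lambda>n. d n < e) sequentially" if e: "e > 0" for e
  proof -
    have "e\<^sup>2 > 0" using e by simp
    from tendstoD[OF summable_LIMSEQ_zero[OF sumd] this]
    show ?thesis
    proof (rule eventually_mono)
      fix n assume "dist ((d n)\<^sup>2) 0 < e\<^sup>2"
      then have "(d n)\<^sup>2 < e\<^sup>2" by simp
      show "d n < e"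
      proof (rule ccontr)
        assume "\<not> d n < e"
        then have "e\<^sup>2 \<le> (d n)\<^sup>2" using e by (intro power_mono) auto
        then show False using \<open>(d n)\<^sup>2 < e\<^sup>2\<close> by linarith
      qed
    qed
  qed
  have Tm: "eventually (\<lambda>n. dist (xs n) (T m (xs n)) < e) sequentially" if e: "e > 0" for m e
  proof -
    have pt: "dist (xs n) (T m (xs n)) \<le> 2 * d n + \<gamma> m * a n" for n
    proof -
      have "dist (xs n) (T m (xs n)) \<le> dist (xs n) (T n (xs n)) + dist (T n (xs n)) (T m (xs n))"
        by (rule dist_triangle)
      also have "\<dots> \<le> d n + \<bar>\<gamma> n - \<gamma> m\<bar> / \<gamma> n * d n"
        using C1[where n=n and m=m and w="xs n"] xsS[of n] unfolding d_def by simp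
      also have "\<bar>\<gamma> n - \<gamma> m\<bar> / \<gamma> n * d n \<le> (\<gamma> n + \<gamma> m) / \<gamma> n * d n"
        using gpos[of n] gpos[of m] d0[of n]
        by (intro mult_right_mono divide_right_mono) auto
      also have "(\<gamma> n + \<gamma> m) / \<gamma> n * d n = d n + \<gamma> m * a n"
        using gpos[of n] unfolding a_def by (simp add: field_simps)
      finally show ?thesis by simp
    qed
    have "e / (2 * (\<gamma> m + 1)) > 0" using e gpos[of m] by simp
    have "e/4 > 0" using e by simp
    from eventually_conj[OF dev[OF this] aev[OF \<open>e / (2 * (\<gamma> m + 1)) > 0\<close>]]
    show ?thesis
    proof (rule eventually_mono)
      fix n assume n: "d n < e/4 \<and> a n < e / (2 * (\<gamma> m + 1))"
      have "\<gamma> m * a n \<le> \<gamma> m * (e / (2 * (\<gamma> m + 1)))"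
        using n gpos[of m] by (intro mult_left_mono) auto
      also have "\<dots> \<le> e / 2" using gpos[of m] e by (simp add: field_simps)
      finally show "dist (xs n) (T m (xs n)) < e" using pt[of n] n by linarith
    qed
  qed
  have inF: "c \<in> F" if s: "strict_mono \<sigma>" and c: "\<forall>y. rho (xs \<circ> \<sigma>) c \<le> rho (xs \<circ> \<sigma>) y" for \<sigma> c
  proof -
    have "T m c = c" for m
    proof (rule demi[OF P2[of m] bus _ c])
      fix e :: real assume "e > 0"
      from eventually_subseq[OF s Tm[OF this, of m]]
      show "eventually (\<lambda>n. dist ((xs \<circ> \<sigma>) n) (T m ((xs \<circ> \<sigma>) n)) < e) sequentially" by simp
    qed
    then show ?thesis unfolding F_def Fix_def by auto
  qed
  have sid: "strict_mono (id :: nat \<Rightarrow> nat)" by (simp add: strict_mono_def)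
  obtain c0 where c0: "\<forall>y. rho (xs \<circ> id) c0 \<le> rho (xs \<circ> id) y"
    using center_exists[OF cat bus] by blast
  have c0F: "c0 \<in> F" using inF[OF sid c0] .
  have same: "c = c0" if s: "strict_mono \<sigma>" and c: "\<forall>y. rho (xs \<circ> \<sigma>) c \<le> rho (xs \<circ> \<sigma>) y" for \<sigma> c
  proof (rule ccontr)
    assume ne: "c \<noteq> c0"
    have cF: "c \<in> F" using inF[OF s c] .
    have l1: "rho (xs \<circ> id) c0 < rho (xs \<circ> id) c"
    proof (rule ccontr)
      assume "\<not> ?thesis"
      then have "\<forall>y. rho (xs \<circ> id) c \<le> rho (xs \<circ> id) y" using c0 by (meson not_less order_trans)
      then show False using center_unique[OF cat bus c0] ne by metis
    qed
    have l2: "rho (xs \<circ> \<sigma>) c < rho (xs \<circ> \<sigma>) c0"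
    proof (rule ccontr)
      assume "\<not> ?thesis"
      then have "\<forall>y. rho (xs \<circ> \<sigma>) c0 \<le> rho (xs \<circ> \<sigma>) y" using c by (meson not_less order_trans)
      then show False using center_unique[OF cat bus c] ne by metis
    qed
    show False using l1 l2 rhoF[OF cF s] rhoF[OF c0F s] rhoF[OF cF sid] rhoF[OF c0F sid] by linarith
  qed
  have "\<forall>\<sigma>. strict_mono \<sigma> \<longrightarrow> asymptotic_center c0 (xs \<circ> \<sigma>) \<and> (\<forall>c'. asymptotic_center c' (xs \<circ> \<sigma>) \<longrightarrow> c' = c0)"
  proof (intro allI impI)
    fix \<sigma> :: "nat \<Rightarrow> nat" assume s: "strict_mono \<sigma>"
    obtain c where c: "\<forall>y. rho (xs \<circ> \<sigma>) c \<le> rho (xs \<circ> \<sigma>) y"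
      using center_exists[OF cat bus] by blast
    have "c = c0" using same[OF s c] .
    then have A: "asymptotic_center c0 (xs \<circ> \<sigma>)" using c center_iff[OF bus] by simp
    have B: "\<forall>c'. asymptotic_center c' (xs \<circ> \<sigma>) \<longrightarrow> c' = c0"
      using center_iff[OF bus] center_unique[OF cat bus] c \<open>c = c0\<close> by metis
    show "asymptotic_center c0 (xs \<circ> \<sigma>) \<and> (\<forall>c'. asymptotic_center c' (xs \<circ> \<sigma>) \<longrightarrow> c' = c0)"
      using A B by blast
  qed
  then have "Delta_converges xs c0" unfolding Delta_converges_def using bu by blast
  then show ?thesis using c0F F_def by blast
qed

end
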